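(* Let $G$ be a finite, simple, connected graph on $n$ vertices, with adjacency entries $a_{uv}$ and degrees $d_u$, and let $0=\lambda_0<\lambda_1\le\dots\le\lambda_{n-1}$ be the eigenvalues of its graph Laplacian. Let $k$ be an integer with $1\le k<n$, and let $\mathfrak{M}_0$ be any set of $n(k-1)$ ordered pairs $(u,v)$ of distinct vertices. Then $$\sum_{j=1}^{k-1}\lambda_j\le \frac{1}{2n}\sum_{(u,v)\in\mathfrak{M}_0}\big(d_u+d_v+2a_{uv}\big).$$
   Context: $a_{uv}=1$ if $u$ and $v$ are adjacent and $0$ otherwise; the graph Laplacian is $H=\mathrm{Deg}-A$ with $\mathrm{Deg}$ the diagonal degree matrix; its eigenvalues are listed with multiplicity in nondecreasing order, indexed from $0$. *)

theory Defs
  imports "Jordan_Normal_Form.Char_Poly"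
begin

definition simple_graph :: "nat \<Rightarrow> (nat \<Rightarrow> nat \<Rightarrow> bool) \<Rightarrow> bool" where
  "simple_graph n E \<longleftrightarrow> (\<forall>u v. E u v \<longrightarrow> u < n \<and> v < n) \<and> (\<forall>u v. E u v \<longrightarrow> E v u) \<and> (\<forall>u. \<not> E u u)"

definition connected_graph :: "nat \<Rightarrow> (nat \<Rightarrow> nat \<Rightarrow> bool) \<Rightarrow> bool" where
  "connected_graph n E \<longleftrightarrow> (\<forall>u<n. \<forall>v<n. E\<^sup>*\<^sup>* u v)"

definition adj :: "(nat \<Rightarrow> nat \<Rightarrow> bool) \<Rightarrow> nat \<Rightarrow> nat \<Rightarrow> real" where
  "adj E u v = (if E u v then 1 else 0)"

definition deg :: "nat \<Rightarrow> (nat \<Rightarrow> nat \<Rightarrow> bool) \<Rightarrow> nat \<Rightarrow> nat" where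
  "deg n E u = card {v. v < n \<and> E u v}"

definition laplacian :: "nat \<Rightarrow> (nat \<Rightarrow> nat \<Rightarrow> bool) \<Rightarrow> real mat" where
  "laplacian n E = mat n n (\<lambda>(i, j). (if i = j then real (deg n E i) else 0) - adj E i j)"

definition eigenvalues_sorted :: "real mat \<Rightarrow> real list \<Rightarrow> bool" where
  "eigenvalues_sorted A xs \<longleftrightarrow> sorted xs \<and> length xs = dim_row A \<and>
     char_poly A = (\<Prod>x\<leftarrow>xs. [:- x, 1:])"

end

theory Submission
  imports Defs "Jordan_Normal_Form.Schur_Decomposition"
begin


lemma real_sprodc[simp]: fixes v w :: "real vec" shows "v \<bullet>c w = v \<bullet> w"
  unfolding scalar_prod_def by (simp add: conjugate_vec_def)

lemma sprod_self_nonneg: fixes v :: "real vec" shows "v \<bullet> v \<ge> 0"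
  unfolding scalar_prod_def by (auto intro: sum_nonneg)

lemma orth_basis_with:
  fixes v :: "real vec"
  assumes v: "v \<in> carrier_vec n" and v1: "v \<bullet> v = 1" and n: "n > 0"
  shows "\<exists>W \<in> carrier_mat n n. transpose_mat W * W = 1\<^sub>m n \<and> col W 0 = v"
proof -
  have v0: "v \<noteq> 0\<^sub>v n" using v1 by auto
  interpret cof_vec_space n "TYPE(real)" .
  define b where "b = basis_completion v"
  define ws where "ws = gram_schmidt n b"
  from basis_completion[OF v v0, folded b_def]
  have dist_b: "distinct b" 
    and indep: "\<not> lin_dep (set b)" and b: "set b \<subseteq> carrier_vec n" and hdb: "hd b = v" 
    and len_b: "length b = n" by auto
  from hdb len_b n obtain vs where bv: "b = v # vs" by (cases b, auto)
  from gram_schmidt_result[OF b dist_b indep refl, folded ws_def]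
  have ws: "set ws \<subseteq> carrier_vec n" "corthogonal ws" "length ws = n" 
    by (auto simp: len_b)
  from gram_schmidt_hd[OF v, of vs, folded bv] have hdws: "hd ws = v" unfolding ws_def .
  have ws0: "ws ! 0 = v" using hdws ws(3) n by (cases ws, auto)
  define us where "us = map (\<lambda>w. (1 / sqrt (w \<bullet> w)) \<cdot>\<^sub>v w) ws"
  have wsc: "i < n \<Longrightarrow> ws ! i \<in> carrier_vec n" for i using ws by auto
  have wpos: "i < n \<Longrightarrow> ws ! i \<bullet> ws ! i > 0" for i
    using corthogonalD[OF ws(2), of i i] ws(3) sprod_self_nonneg[of "ws ! i"] by auto
  have usc: "i < n \<Longrightarrow> us ! i \<in> carrier_vec n" for i using wsc ws(3) unfolding us_def by auto
  have usd: "i < n \<Longrightarrow> j < n \<Longrightarrow> us ! i \<bullet> us ! j = (if i = j then 1 else 0)" for i j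
  proof -
    assume i: "i < n" and j: "j < n"
    have "us ! i \<bullet> us ! j = (1 / sqrt (ws!i \<bullet> ws!i)) * (1 / sqrt (ws!j \<bullet> ws!j)) * (ws ! i \<bullet> ws ! j)"
      unfolding us_def using i j ws(3) wsc[OF i] wsc[OF j]
      by (simp add: smult_scalar_prod_distrib scalar_prod_smult_distrib[of _ n])
    also have "\<dots> = (if i = j then 1 else 0)"
      using corthogonalD[OF ws(2), of i j] ws(3) i j wpos[OF i]
      by (auto simp: field_simps)
    finally show ?thesis .
  qed
  define W where "W = mat_of_cols n us"
  have lus: "length us = n" using ws(3) unfolding us_def by auto
  have W: "W \<in> carrier_mat n n" unfolding W_def using lus by auto
  have colW: "i < n \<Longrightarrow> col W i = us ! i" for i unfolding W_def using lus usc
    by (simp add: col_mat_of_cols)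
  have "transpose_mat W * W = 1\<^sub>m n"
    by (rule eq_matI, insert W colW usd, auto)
  moreover have "col W 0 = v" using colW[OF n] ws0 v1 unfolding us_def using n ws(3) by simp
  ultimately show ?thesis using W by blast
qed


lemma spectral_real_sym:
  fixes A :: "real mat"
  assumes A: "A \<in> carrier_mat n n" and sym: "transpose_mat A = A"
    and c: "char_poly A = (\<Prod>e\<leftarrow>es. [:- e, 1:])"
  shows "\<exists>P \<in> carrier_mat n n. transpose_mat P * P = 1\<^sub>m n \<and> P * transpose_mat P = 1\<^sub>m n \<and>
     transpose_mat P * A * P = mat n n (\<lambda>(i,j). if i = j then es ! i else 0)"
  using A sym c
proof (induct es arbitrary: n A)
  case Nil
  with degree_monic_char_poly[of A n] have "n = 0" by auto
  then show ?case using Nil by (intro bexI[of _ "1\<^sub>m 0"], auto intro!: eq_matI)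
next
  case (Cons e es n A)
  let ?n1 = "n - 1"
  from Cons have A: "A \<in> carrier_mat n n" and sym: "transpose_mat A = A" by auto
  let ?cp = "char_poly A"
  from Cons(4)
  have cp: "?cp = [: -e, 1 :] * (\<Prod>e \<leftarrow> es. [:- e, 1:])" by auto
  have mon: "monic (\<Prod>e\<leftarrow> es. [:- e, 1:])" by (rule monic_prod_list, auto)
  have deg: "degree ?cp = Suc (degree (\<Prod>e\<leftarrow> es. [:- e, 1:]))" unfolding cp
    by (subst degree_mult_eq, insert mon, auto)
  with degree_monic_char_poly[OF A] have n: "n > 0" by auto
  have ee: "eigenvalue A e" 
    unfolding eigenvalue_root_char_poly[OF A] cp by simp
  define v where "v = find_eigenvector A e"
  from find_eigenvector[OF A ee] have ev: "eigenvector A v e" unfolding v_def .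
  from this[unfolded eigenvector_def]
  have v: "v \<in> carrier_vec n" and v0: "v \<noteq> 0\<^sub>v n" and Av: "A *\<^sub>v v = e \<cdot>\<^sub>v v" using A by auto
  have vpos: "v \<bullet> v > 0"
    using v v0 sprod_self_nonneg[of v] conjugate_square_eq_0_vec[of v n] real_sprodc by (smt (verit))
  define u where "u = (1 / sqrt (v \<bullet> v)) \<cdot>\<^sub>v v"
  have u: "u \<in> carrier_vec n" using v unfolding u_def by auto
  have u1: "u \<bullet> u = 1" unfolding u_def using v vpos
    by (simp add: smult_scalar_prod_distrib scalar_prod_smult_distrib[of _ n])
  have Au: "A *\<^sub>v u = e \<cdot>\<^sub>v u" unfolding u_def using A v Av
    by (simp add: mult_mat_vec smult_smult_assoc mult.commute)
  from orth_basis_with[OF u u1 n] obtain W where W: "W \<in> carrier_mat n n"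
    and WW: "transpose_mat W * W = 1\<^sub>m n" and W0: "col W 0 = u" by auto
  have WW': "W * transpose_mat W = 1\<^sub>m n"
    using mat_mult_left_right_inverse[OF _ W WW] W by auto
  define A' where "A' = transpose_mat W * A * W"
  have A': "A' \<in> carrier_mat n n" unfolding A'_def using A W by auto
  have symA': "transpose_mat A' = A'"
  proof -
    have "transpose_mat A' = transpose_mat W * transpose_mat (transpose_mat W * A)"
      unfolding A'_def using A W by (intro transpose_mult[of _ n n], auto)
    also have "\<dots> = transpose_mat W * (transpose_mat A * W)"
      using A W by (subst transpose_mult[of _ n n], auto)
    also have "\<dots> = A'" unfolding A'_def using A W sym by (simp add: assoc_mult_mat[of _ n n _ n _ n])
    finally show ?thesis .
  qed
  have A'col: "i < n \<Longrightarrow> A' $$ (i, 0) = (if i = 0 then e else 0)" for i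
  proof -
    assume i: "i < n"
    have "A' $$ (i, 0) = (transpose_mat W * (A * W)) $$ (i, 0)"
      unfolding A'_def using A W by (simp add: assoc_mult_mat[of _ n n _ n _ n])
    also have "\<dots> = col W i \<bullet> (A *\<^sub>v col W 0)" using A W i n by (simp add: mult_mat_vec_def)
    also have "\<dots> = e * (col W i \<bullet> col W 0)" using Au W0 W i u
      by (simp add: scalar_prod_smult_distrib[of _ n])
    also have "col W i \<bullet> col W 0 = (transpose_mat W * W) $$ (i, 0)" using W i n by simp
    also have "\<dots> = (if i = 0 then 1 else 0)" using WW i n by simp
    finally show ?thesis by simp
  qed
  define A3 where "A3 = mat ?n1 ?n1 (\<lambda>(i,j). A' $$ (Suc i, Suc j))"
  have A3: "A3 \<in> carrier_mat ?n1 ?n1" unfolding A3_def by auto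
  define A1 where "A1 = mat 1 1 (\<lambda>_. e)"
  have A1: "A1 \<in> carrier_mat 1 1" unfolding A1_def by auto
  have A'row: "j < n \<Longrightarrow> A' $$ (0, j) = (if j = 0 then e else 0)" for j
    using A'col[of j] arg_cong[OF symA', of "\<lambda>M. M $$ (j, 0)"] A' n by auto
  have A'block: "A' = four_block_mat A1 (0\<^sub>m 1 ?n1) (0\<^sub>m ?n1 1) A3"
    by (rule eq_matI, insert A' n A'col A'row, auto simp: A1_def A3_def)
  have symA3: "transpose_mat A3 = A3"
  proof (rule eq_matI)
    fix i j assume "i < dim_row A3" "j < dim_col A3"
    then have i: "Suc i < n" and j: "Suc j < n" using A3 by auto
    have "A' $$ (Suc j, Suc i) = transpose_mat A' $$ (Suc i, Suc j)" using A' i j by simp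
    then show "transpose_mat A3 $$ (i, j) = A3 $$ (i, j)" using i j symA' by (simp add: A3_def)
  qed (insert A3, auto)
  have "similar_mat A' A"
    unfolding similar_mat_def similar_mat_wit_def
    by (rule exI[of _ "transpose_mat W"], rule exI[of _ W],
      insert W WW WW' A A', auto simp: A'_def Let_def)
  from cp char_poly_similar[OF this]
  have cp: "char_poly A' = [: -e,1 :] * (\<Prod> e \<leftarrow> es. [:- e, 1:])" by simp
  also have "char_poly A' = char_poly A1 * char_poly A3" 
    unfolding A'block
    by (rule char_poly_four_block_zeros_col[OF A1 _ A3], auto)
  also have "char_poly A1 = [: -e,1 :]"
    by (simp add: A1_def char_poly_defs det_def sign_def)
  finally have cp3: "char_poly A3 = (\<Prod> e \<leftarrow> es. [:- e, 1:])"
    by (metis mult_cancel_left pCons_eq_0_iff zero_neq_one)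
  from Cons(1)[OF A3 symA3 cp3] obtain P3 where P3: "P3 \<in> carrier_mat ?n1 ?n1"
    and P3a: "transpose_mat P3 * P3 = 1\<^sub>m ?n1" and P3b: "P3 * transpose_mat P3 = 1\<^sub>m ?n1"
    and P3c: "transpose_mat P3 * A3 * P3 = mat ?n1 ?n1 (\<lambda>(i,j). if i = j then es ! i else 0)"
    by auto
  define Pb where "Pb = four_block_mat (1\<^sub>m 1) (0\<^sub>m 1 ?n1) (0\<^sub>m ?n1 1) P3"
  have Pbt: "transpose_mat Pb = four_block_mat (1\<^sub>m 1) (0\<^sub>m 1 ?n1) (0\<^sub>m ?n1 1) (transpose_mat P3)"
    unfolding Pb_def using P3 by (subst transpose_four_block_mat, auto)
  have nn: "1 + ?n1 = n" using n by auto
  have Pb: "Pb \<in> carrier_mat n n" unfolding Pb_def using P3 four_block_carrier_mat[of "1\<^sub>m 1" 1 1 P3 ?n1 ?n1] nn by auto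
  have Pb1: "transpose_mat Pb * Pb = 1\<^sub>m n" unfolding Pbt unfolding Pb_def
    by (subst mult_four_block_mat[of _ 1 1 _ ?n1 _ ?n1 _ _ 1 _ ?n1], insert P3 P3a nn, auto)
  have Pb2: "Pb * transpose_mat Pb = 1\<^sub>m n" unfolding Pbt unfolding Pb_def
    by (subst mult_four_block_mat[of _ 1 1 _ ?n1 _ ?n1 _ _ 1 _ ?n1], insert P3 P3b nn, auto)
  have Pb3a: "transpose_mat Pb * A' = four_block_mat A1 (0\<^sub>m 1 ?n1) (0\<^sub>m ?n1 1) (transpose_mat P3 * A3)"
    unfolding Pbt unfolding A'block
    by (subst mult_four_block_mat[of _ 1 1 _ ?n1 _ ?n1 _ _ 1 _ ?n1]) (insert P3 A1 A3, auto)
  have Pb3: "transpose_mat Pb * A' * Pb = four_block_mat A1 (0\<^sub>m 1 ?n1) (0\<^sub>m ?n1 1) (transpose_mat P3 * A3 * P3)"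
    unfolding Pb3a unfolding Pb_def
    by (subst mult_four_block_mat[of _ 1 1 _ ?n1 _ ?n1 _ _ 1 _ ?n1]) (insert P3 A1 A3, auto)
  define P where "P = W * Pb"
  have P: "P \<in> carrier_mat n n" unfolding P_def using W Pb by auto
  have tP: "transpose_mat P = transpose_mat Pb * transpose_mat W"
    unfolding P_def using W Pb by (simp add: transpose_mult[of _ n n])
  have "transpose_mat P * P = transpose_mat Pb * (transpose_mat W * W) * Pb"
    unfolding tP unfolding P_def using W Pb by (simp add: assoc_mult_mat[of _ n n _ n _ n])
  also have "\<dots> = 1\<^sub>m n" using WW Pb1 Pb by simp
  finally have P1: "transpose_mat P * P = 1\<^sub>m n" .
  have "P * transpose_mat P = W * (Pb * transpose_mat Pb) * transpose_mat W"
    unfolding tP unfolding P_def using W Pb by (simp add: assoc_mult_mat[of _ n n _ n _ n])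
  also have "\<dots> = 1\<^sub>m n" using WW' Pb2 W by simp
  finally have P2: "P * transpose_mat P = 1\<^sub>m n" .
  have "transpose_mat P * A * P = transpose_mat Pb * A' * Pb"
    unfolding tP unfolding P_def A'_def using W Pb A by (simp add: assoc_mult_mat[of _ n n _ n _ n])
  also have "\<dots> = mat n n (\<lambda>(i,j). if i = j then (e # es) ! i else 0)"
    unfolding Pb3 P3c
    by (rule eq_matI, insert nn, auto simp: A1_def nth_Cons')
  finally show ?case using P P1 P2 by blast
qed



lemma kyfan:
  fixes l r :: "nat \<Rightarrow> real"
  assumes mono: "\<And>i j. i \<le> j \<Longrightarrow> j < n \<Longrightarrow> l i \<le> l j"
    and r0: "\<And>j. j < n \<Longrightarrow> 0 \<le> r j" and r1: "\<And>j. j < n \<Longrightarrow> r j \<le> 1"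
    and rs: "(\<Sum>j<n. r j) = real k" and k: "1 \<le> k" "k \<le> n"
  shows "(\<Sum>j<k. l j) \<le> (\<Sum>j<n. l j * r j)"
proof -
  have split: "{..<n} = {..<k} \<union> {k..<n}" using k by auto
  have disj: "{..<k} \<inter> {k..<n} = {}" by auto
  have "(\<Sum>j<n. l j * r j) - (\<Sum>j<k. l j) = (\<Sum>j<k. l j * (r j - 1)) + (\<Sum>j\<in>{k..<n}. l j * r j)"
    unfolding split by (subst sum.union_disjoint, auto simp: algebra_simps sum_subtractf)
  also have "\<dots> \<ge> (\<Sum>j<k. l (k-1) * (r j - 1)) + (\<Sum>j\<in>{k..<n}. l (k-1) * r j)"
  proof (rule add_mono)
    show "(\<Sum>j<k. l (k-1) * (r j - 1)) \<le> (\<Sum>j<k. l j * (r j - 1))"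
    proof (rule sum_mono)
      fix j assume j: "j \<in> {..<k}"
      have "l j \<le> l (k-1)" using mono[of j "k-1"] j k by auto
      moreover have "r j - 1 \<le> 0" using r1[of j] j k by auto
      ultimately show "l (k-1) * (r j - 1) \<le> l j * (r j - 1)" by (simp add: mult_right_mono_neg)
    qed
    show "(\<Sum>j\<in>{k..<n}. l (k-1) * r j) \<le> (\<Sum>j\<in>{k..<n}. l j * r j)"
    proof (rule sum_mono)
      fix j assume j: "j \<in> {k..<n}"
      have "l (k-1) \<le> l j" using mono[of "k-1" j] j k by auto
      then show "l (k-1) * r j \<le> l j * r j" using r0[of j] j by (simp add: mult_right_mono)
    qed
  qed
  also have "(\<Sum>j<k. l (k-1) * (r j - 1)) + (\<Sum>j\<in>{k..<n}. l (k-1) * r j)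
      = l (k-1) * ((\<Sum>j<n. r j) - real k)"
    unfolding split by (subst sum.union_disjoint, auto simp: algebra_simps sum_subtractf sum_distrib_left sum_distrib_right)
  also have "\<dots> = 0" using rs by simp
  finally show ?thesis by simp
qed

lemma quad_psd:
  fixes g :: "nat \<Rightarrow> nat \<Rightarrow> real" and x :: "nat \<Rightarrow> real"
  assumes sym: "\<And>a b. g a b = g b a" and pos: "\<And>a b. g a b \<ge> 0"
  shows "0 \<le> (\<Sum>a<n. x a * (\<Sum>b<n. ((if a = b then (\<Sum>c<n. g a c) else 0) - g a b) * x b))"
proof -
  have e1: "(\<Sum>a<n. x a * (\<Sum>b<n. ((if a = b then (\<Sum>c<n. g a c) else 0) - g a b) * x b))
    = (\<Sum>a<n. \<Sum>b<n. g a b * x a * x a) - (\<Sum>a<n. \<Sum>b<n. g a b * x a * x b)"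
  proof -
    have "\<And>a. a < n \<Longrightarrow> (\<Sum>b<n. ((if a = b then (\<Sum>c<n. g a c) else 0) - g a b) * x b)
       = (\<Sum>c<n. g a c) * x a - (\<Sum>b<n. g a b * x b)"
    proof -
      fix a assume a: "a < n"
      have "(\<Sum>b<n. ((if a = b then (\<Sum>c<n. g a c) else 0) - g a b) * x b)
        = (\<Sum>b<n. (if a = b then (\<Sum>c<n. g a c) else 0) * x b) - (\<Sum>b<n. g a b * x b)"
        by (simp add: left_diff_distrib sum_subtractf)
      also have "(\<Sum>b<n. (if a = b then (\<Sum>c<n. g a c) else 0) * x b) 
          = (\<Sum>b<n. (if a = b then (\<Sum>c<n. g a c) * x b else 0))"
        by (intro sum.cong) auto
      also have "\<dots> = (\<Sum>c<n. g a c) * x a"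
        using a by (simp add: sum.delta')
      finally show "(\<Sum>b<n. ((if a = b then (\<Sum>c<n. g a c) else 0) - g a b) * x b)
       = (\<Sum>c<n. g a c) * x a - (\<Sum>b<n. g a b * x b)" .
    qed
    then have "(\<Sum>a<n. x a * (\<Sum>b<n. ((if a = b then (\<Sum>c<n. g a c) else 0) - g a b) * x b))
      = (\<Sum>a<n. x a * ((\<Sum>c<n. g a c) * x a - (\<Sum>b<n. g a b * x b)))"
      by (intro sum.cong) auto
    also have "\<dots> = (\<Sum>a<n. \<Sum>b<n. g a b * x a * x a) - (\<Sum>a<n. \<Sum>b<n. g a b * x a * x b)"
      by (simp add: algebra_simps sum_subtractf sum_distrib_left sum_distrib_right)
    finally show ?thesis .
  qed
  have e2: "(\<Sum>a<n. \<Sum>b<n. g a b * x b * x b) = (\<Sum>a<n. \<Sum>b<n. g a b * x a * x a)"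
    by (subst sum.swap) (simp add: sym)
  have "0 \<le> (\<Sum>a<n. \<Sum>b<n. g a b * (x a - x b)^2)"
    by (intro sum_nonneg, simp add: pos)
  also have "\<dots> = (\<Sum>a<n. \<Sum>b<n. g a b * x a * x a) + (\<Sum>a<n. \<Sum>b<n. g a b * x b * x b)
      - 2 * (\<Sum>a<n. \<Sum>b<n. g a b * x a * x b)"
    by (simp add: power2_eq_square algebra_simps sum_subtractf sum.distrib sum_distrib_left)
  finally show ?thesis unfolding e1 e2 by simp
qed



theorem mainTheorem5:
  fixes n k :: nat and E :: "nat \<Rightarrow> nat \<Rightarrow> bool" and lam :: "real list"
    and M0 :: "(nat \<times> nat) set"
  assumes "simple_graph n E" and "connected_graph n E"
    and "eigenvalues_sorted (laplacian n E) lam"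
    and "1 \<le> k" and "k < n"
    and "M0 \<subseteq> {(u, v). u < n \<and> v < n \<and> u \<noteq> v}"
    and "card M0 = n * (k - 1)"
  shows "(\<Sum>j = 1..k - 1. lam ! j)
         \<le> (1 / (2 * real n)) * (\<Sum>(u, v)\<in>M0. real (deg n E u) + real (deg n E v) + 2 * adj E u v)"
proof -
  note sg = assms(1)[unfolded simple_graph_def]
  have adjsym: "\<And>a b. adj E a b = adj E b a" using sg unfolding adj_def by metis
  have adjpos: "\<And>a b. adj E a b \<ge> 0" unfolding adj_def by auto
  have adjirr: "\<And>a. adj E a a = 0" using sg unfolding adj_def by auto
  have degsum: "real (deg n E a) = (\<Sum>b<n. adj E a b)" for a
  proof -
    have "(\<Sum>b<n. adj E a b) = (\<Sum>b\<in>{b\<in>{..<n}. E a b}. 1)"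
      unfolding adj_def by (subst sum.inter_filter) auto
    moreover have "{b\<in>{..<n}. E a b} = {b. b < n \<and> E a b}" by auto
    ultimately show ?thesis unfolding deg_def by simp
  qed
  define L where "L = laplacian n E"
  have L: "L \<in> carrier_mat n n" unfolding L_def laplacian_def by auto
  have Lij: "\<And>a b. a < n \<Longrightarrow> b < n \<Longrightarrow> L $$ (a, b) = (if a = b then (\<Sum>c<n. adj E a c) else 0) - adj E a b"
    unfolding L_def laplacian_def by (simp add: degsum)
  have Lsym: "\<And>a b. a < n \<Longrightarrow> b < n \<Longrightarrow> L $$ (a, b) = L $$ (b, a)"
    using Lij adjsym by auto
  have symL: "transpose_mat L = L" by (rule eq_matI, insert L Lsym, auto)
  note es = assms(3)[unfolded eigenvalues_sorted_def, folded L_def]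
  have lenlam: "length lam = n" using es L by auto
  from spectral_real_sym[OF L symL es[THEN conjunct2, THEN conjunct2]] obtain P where
    P: "P \<in> carrier_mat n n" and PtP: "transpose_mat P * P = 1\<^sub>m n"
    and PPt: "P * transpose_mat P = 1\<^sub>m n"
    and PLP: "transpose_mat P * L * P = mat n n (\<lambda>(i,j). if i = j then lam ! i else 0)" by auto
  define Dm where "Dm = mat n n (\<lambda>(i,j). if i = j then lam ! i else (0::real))"
  have Dm: "Dm \<in> carrier_mat n n" unfolding Dm_def by auto
  have LP: "L * P = P * Dm"
  proof -
    have "L * P = (P * transpose_mat P) * L * P" using PPt L P by simp
    also have "\<dots> = P * (transpose_mat P * L * P)" using P L by (simp add: assoc_mult_mat[of _ n n _ n _ n])
    finally show ?thesis using PLP unfolding Dm_def by simp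
  qed
  define p where "p = (\<lambda>a j. P $$ (a, j))"
  have PD: "P * Dm = mat n n (\<lambda>(a,j). p a j * lam ! j)"
  proof (rule eq_matI)
    fix a j assume "a < dim_row (mat n n (\<lambda>(a,j). p a j * lam ! j))" "j < dim_col (mat n n (\<lambda>(a,j). p a j * lam ! j))"
    then have a: "a < n" and j: "j < n" by auto
    have "(P * Dm) $$ (a, j) = (\<Sum>i<n. p a i * (if i = j then lam ! i else 0))"
      using a j P Dm by (simp add: scalar_prod_def Dm_def p_def atLeast0LessThan)
    also have "\<dots> = (\<Sum>i<n. if i = j then p a i * lam ! i else 0)" by (intro sum.cong) auto
    also have "\<dots> = p a j * lam ! j" using j by (simp add: sum.delta)
    finally show "(P * Dm) $$ (a, j) = mat n n (\<lambda>(a,j). p a j * lam ! j) $$ (a, j)" using a j by simp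
  qed (insert P Dm, auto)
  have LPent: "\<And>a j. a < n \<Longrightarrow> j < n \<Longrightarrow> (\<Sum>b<n. L $$ (a, b) * p b j) = p a j * lam ! j"
  proof -
    fix a j assume a: "a < n" and j: "j < n"
    have "(L * P) $$ (a, j) = (\<Sum>b<n. L $$ (a, b) * p b j)"
      using a j P L by (simp add: scalar_prod_def p_def atLeast0LessThan)
    then show "(\<Sum>b<n. L $$ (a, b) * p b j) = p a j * lam ! j" unfolding LP PD using a j by simp
  qed
  have F1: "\<And>i j. i < n \<Longrightarrow> j < n \<Longrightarrow> (\<Sum>a<n. p a i * p a j) = (if i = j then 1 else 0)"
  proof -
    fix i j assume i: "i < n" and j: "j < n"
    have "(transpose_mat P * P) $$ (i, j) = (\<Sum>a<n. p a i * p a j)"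
      using i j P by (simp add: scalar_prod_def p_def atLeast0LessThan)
    then show "(\<Sum>a<n. p a i * p a j) = (if i = j then 1 else 0)" unfolding PtP using i j by simp
  qed
  have F2: "\<And>a b. a < n \<Longrightarrow> b < n \<Longrightarrow> (\<Sum>j<n. p a j * p b j) = (if a = b then 1 else 0)"
  proof -
    fix a b assume a: "a < n" and b: "b < n"
    have "(P * transpose_mat P) $$ (a, b) = (\<Sum>j<n. p a j * p b j)"
      using a b P by (simp add: scalar_prod_def p_def atLeast0LessThan)
    then show "(\<Sum>j<n. p a j * p b j) = (if a = b then 1 else 0)" unfolding PPt using a b by simp
  qed
  have Lent: "\<And>a b. a < n \<Longrightarrow> b < n \<Longrightarrow> L $$ (a, b) = (\<Sum>j<n. lam ! j * p a j * p b j)"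
  proof -
    fix a b assume a: "a < n" and b: "b < n"
    have "L = L * (P * transpose_mat P)" using PPt L by simp
    also have "\<dots> = (L * P) * transpose_mat P" using L P by (simp add: assoc_mult_mat[of _ n n _ n _ n])
    finally have "L $$ (a, b) = (P * Dm * transpose_mat P) $$ (a, b)" unfolding LP by simp
    also have "\<dots> = (\<Sum>j<n. (p a j * lam ! j) * p b j)" unfolding PD
      using a b P by (simp add: scalar_prod_def p_def atLeast0LessThan)
    finally show "L $$ (a, b) = (\<Sum>j<n. lam ! j * p a j * p b j)" by (simp add: ac_simps)
  qed
  have lam0: "\<And>j. j < n \<Longrightarrow> lam ! j \<ge> 0"
  proof -
    fix j assume j: "j < n"
    have "0 \<le> (\<Sum>a<n. p a j * (\<Sum>b<n. ((if a = b then (\<Sum>c<n. adj E a c) else 0) - adj E a b) * p b j))"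
      by (rule quad_psd[OF adjsym adjpos])
    also have "\<dots> = (\<Sum>a<n. p a j * (\<Sum>b<n. L $$ (a, b) * p b j))"
      by (intro sum.cong refl arg_cong2[where f="(*)"]) (simp add: Lij)
    also have "\<dots> = (\<Sum>a<n. p a j * (p a j * lam ! j))"
      by (intro sum.cong refl) (simp add: LPent j)
    also have "\<dots> = lam ! j * (\<Sum>a<n. p a j * p a j)" by (simp add: sum_distrib_left ac_simps)
    also have "\<dots> = lam ! j" using F1[OF j j] by simp
    finally show "lam ! j \<ge> 0" .
  qed
  define s where "s = (\<lambda>j. \<Sum>a<n. p a j)"
  have lams: "\<And>j. j < n \<Longrightarrow> lam ! j * s j = 0"
  proof -
    fix j assume j: "j < n"
    have "lam ! j * s j = (\<Sum>a<n. p a j * lam ! j)" unfolding s_def by (simp add: sum_distrib_left ac_simps)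
    also have "\<dots> = (\<Sum>a<n. \<Sum>b<n. L $$ (a, b) * p b j)" by (intro sum.cong refl) (simp add: LPent j)
    also have "\<dots> = (\<Sum>b<n. p b j * (\<Sum>a<n. L $$ (b, a)))"
      by (subst sum.swap) (auto simp: sum_distrib_left ac_simps Lsym intro!: sum.cong)
    also have "\<dots> = 0"
    proof (intro sum.neutral ballI)
      fix b assume "b \<in> {..<n}"
      then have b: "b < n" by auto
      have "(\<Sum>a<n. L $$ (b, a)) = (\<Sum>a<n. (if b = a then (\<Sum>c<n. adj E b c) else 0)) - (\<Sum>a<n. adj E b a)"
        using b by (simp add: Lij sum_subtractf)
      also have "\<dots> = 0" using b by (simp add: sum.delta)
      finally show "p b j * (\<Sum>a<n. L $$ (b, a)) = 0" by simp
    qed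
    finally show "lam ! j * s j = 0" .
  qed
  have M0: "M0 \<subseteq> {..<n} \<times> {..<n}" using assms(6) by auto
  have finM0: "finite M0" using M0 finite_subset by blast
  define c where "c = (\<lambda>(u, v) j. (p u j - p v j)^2)"
  have w: "\<And>u v. (u, v) \<in> M0 \<Longrightarrow> real (deg n E u) + real (deg n E v) + 2 * adj E u v
     = (\<Sum>j<n. lam ! j * c (u, v) j)"
  proof -
    fix u v assume uv: "(u, v) \<in> M0"
    then have u: "u < n" and v: "v < n" and ne: "u \<noteq> v" using assms(6) by auto
    have "real (deg n E u) + real (deg n E v) + 2 * adj E u v
       = L $$ (u, u) + L $$ (v, v) - L $$ (u, v) - L $$ (v, u)"
    proof -
      have "L $$ (u, u) = real (deg n E u)" using Lij[OF u u] by (simp add: degsum adjirr)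
      moreover have "L $$ (v, v) = real (deg n E v)" using Lij[OF v v] by (simp add: degsum adjirr)
      moreover have "L $$ (u, v) = - adj E u v" using Lij[OF u v] ne by simp
      moreover have "L $$ (v, u) = - adj E u v" using Lij[OF v u] ne adjsym[of v u] by simp
      ultimately show ?thesis by simp
    qed
    also have "\<dots> = (\<Sum>j<n. lam!j*p u j*p u j) + (\<Sum>j<n. lam!j*p v j*p v j)
        - (\<Sum>j<n. lam!j*p u j*p v j) - (\<Sum>j<n. lam!j*p v j*p u j)"
      using u v by (simp add: Lent)
    also have "\<dots> = (\<Sum>j<n. lam!j*p u j*p u j + lam!j*p v j*p v j - lam!j*p u j*p v j - lam!j*p v j*p u j)"
      by (simp only: sum.distrib sum_subtractf)
    also have "\<dots> = (\<Sum>j<n. lam ! j * c (u, v) j)"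
      by (intro sum.cong refl) (simp add: c_def power2_eq_square algebra_simps)
    finally show "real (deg n E u) + real (deg n E v) + 2 * adj E u v = (\<Sum>j<n. lam ! j * c (u, v) j)" .
  qed
  define q where "q = (\<lambda>j. (1 / (2 * real n)) * (\<Sum>x\<in>M0. c x j))"
  have n0: "real n > 0" using assms(5) by auto
  have RHS: "(1 / (2 * real n)) * (\<Sum>(u, v)\<in>M0. real (deg n E u) + real (deg n E v) + 2 * adj E u v)
     = (\<Sum>j<n. lam ! j * q j)"
  proof -
    have "(\<Sum>(u, v)\<in>M0. real (deg n E u) + real (deg n E v) + 2 * adj E u v)
        = (\<Sum>x\<in>M0. \<Sum>j<n. lam ! j * c x j)" by (intro sum.cong refl) (auto simp: w)
    also have "\<dots> = (\<Sum>j<n. lam ! j * (\<Sum>x\<in>M0. c x j))"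
      by (subst sum.swap) (simp add: sum_distrib_left)
    finally have "(1 / (2 * real n)) * (\<Sum>(u, v)\<in>M0. real (deg n E u) + real (deg n E v) + 2 * adj E u v)
       = (1 / (2 * real n)) * (\<Sum>j<n. lam ! j * (\<Sum>x\<in>M0. c x j))" by simp
    also have "\<dots> = (\<Sum>j<n. lam ! j * q j)"
      unfolding q_def sum_distrib_left by (intro sum.cong refl) (simp only: ac_simps)
    finally show ?thesis .
  qed
  have sumc: "\<And>x. x \<in> M0 \<Longrightarrow> (\<Sum>j<n. c x j) = 2"
  proof -
    fix x assume x: "x \<in> M0"
    then obtain u v where x: "x = (u, v)" and u: "u < n" and v: "v < n" and ne: "u \<noteq> v" using assms(6) by auto
    have "(\<Sum>j<n. c x j) = (\<Sum>j<n. p u j * p u j) + (\<Sum>j<n. p v j * p v j) - 2 * (\<Sum>j<n. p u j * p v j)"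
      unfolding x c_def by (simp add: power2_eq_square algebra_simps sum_subtractf sum.distrib sum_distrib_left)
    then show "(\<Sum>j<n. c x j) = 2" using F2[OF u u] F2[OF v v] F2[OF u v] ne by simp
  qed
  have sumq: "(\<Sum>j<n. q j) = real k - 1"
  proof -
    have "(\<Sum>j<n. q j) = (1 / (2 * real n)) * (\<Sum>x\<in>M0. \<Sum>j<n. c x j)"
      unfolding q_def by (simp add: sum_divide_distrib[symmetric]) (metis sum.swap)
    also have "\<dots> = (1 / (2 * real n)) * (2 * real (card M0))" by (simp add: sumc)
    also have "\<dots> = real k - 1" using assms(4,7) n0 by (simp add: of_nat_diff)
    finally show ?thesis .
  qed
  have sums: "(\<Sum>j<n. (s j)^2) = real n"
  proof -
    have "(\<Sum>j<n. (s j)^2) = (\<Sum>j<n. \<Sum>a<n. \<Sum>b<n. p a j * p b j)"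
      unfolding s_def by (simp add: power2_eq_square sum_product)
    also have "\<dots> = (\<Sum>a<n. \<Sum>b<n. \<Sum>j<n. p a j * p b j)"
      by (subst sum.swap, subst (2) sum.swap, rule refl)
    also have "\<dots> = (\<Sum>a<n. \<Sum>b<n. (if a = b then 1 else 0))"
      by (intro sum.cong refl) (simp add: F2)
    also have "\<dots> = real n" by (simp add: sum.delta)
    finally show ?thesis .
  qed
  have qb: "\<And>j. j < n \<Longrightarrow> q j + (s j)^2 / real n \<le> 1"
  proof -
    fix j assume j: "j < n"
    have "(\<Sum>x\<in>M0. c x j) \<le> (\<Sum>x\<in>{..<n} \<times> {..<n}. c x j)"
      by (rule sum_mono2[OF _ M0]) (auto simp: c_def)
    also have "\<dots> = (\<Sum>u<n. \<Sum>v<n. (p u j - p v j)^2)"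
      unfolding c_def by (simp add: sum.cartesian_product case_prod_beta)
    also have "\<dots> = real n * (\<Sum>u<n. p u j * p u j) + real n * (\<Sum>v<n. p v j * p v j)
         - 2 * (\<Sum>u<n. p u j) * (\<Sum>v<n. p v j)"
      by (simp add: power2_eq_square algebra_simps sum_subtractf sum.distrib sum_distrib_left sum_distrib_right)
    also have "\<dots> = 2 * real n - 2 * (s j)^2" using F1[OF j j] unfolding s_def by (simp add: power2_eq_square)
    finally have "(\<Sum>x\<in>M0. c x j) \<le> 2 * real n - 2 * (s j)^2" .
    then show "q j + (s j)^2 / real n \<le> 1" unfolding q_def using n0 by (simp add: field_simps)
  qed
  have q0: "\<And>j. q j \<ge> 0" unfolding q_def c_def using n0 by (auto intro!: sum_nonneg divide_nonneg_nonneg simp: case_prod_beta)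
  define r where "r = (\<lambda>j. q j + (s j)^2 / real n)"
  have sumr: "(\<Sum>j<n. r j) = real k"
    unfolding r_def by (simp add: sum.distrib sumq sum_divide_distrib[symmetric] sums n0 assms(4))
      (use assms(4,5) in linarith)
  have KF: "(\<Sum>j<k. lam ! j) \<le> (\<Sum>j<n. lam ! j * r j)"
  proof (rule kyfan[where n=n])
    show "\<And>i j. i \<le> j \<Longrightarrow> j < n \<Longrightarrow> lam ! i \<le> lam ! j"
      using es lenlam by (auto intro: sorted_nth_mono)
    show "\<And>j. j < n \<Longrightarrow> 0 \<le> r j" unfolding r_def using q0 n0 by (auto intro: add_nonneg_nonneg)
    show "\<And>j. j < n \<Longrightarrow> r j \<le> 1" unfolding r_def using qb by auto
  qed (use sumr assms(4,5) in auto)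
  have "(\<Sum>j<n. lam ! j * r j) = (\<Sum>j<n. lam ! j * q j)"
  proof (intro sum.cong refl)
    fix j assume "j \<in> {..<n}"
    then have "lam ! j * (s j)^2 = 0" using lams[of j] by (simp add: power2_eq_square)
    then show "lam ! j * r j = lam ! j * q j" unfolding r_def by (simp add: algebra_simps)
  qed
  moreover have "(\<Sum>j = 1..k - 1. lam ! j) \<le> (\<Sum>j<k. lam ! j)"
  proof -
    have "{..<k} = insert 0 {1..k-1}" using assms(4) by auto
    then have "(\<Sum>j<k. lam ! j) = lam ! 0 + (\<Sum>j = 1..k - 1. lam ! j)" by simp
    then show ?thesis using lam0[of 0] assms(5) by simp
  qed
  ultimately show ?thesis using KF RHS by simp
qed

end
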